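(* Let $n\in\mathbb{N}$, let $\alpha_1,\dots,\alpha_n\ge0$, and let $U,V_1,\dots,V_n$ be independent nonnegative random variables with densities $f_U,f_{V_1},\dots,f_{V_n}$. Set $Z_i=\alpha_iU+V_i$ and let $X_1,\dots,X_n$ be random variables which, conditionally on $(U,V_1,\dots,V_n)$, are independent with $X_i$ Poisson distributed with mean $Z_i$. Then for all $x_1,\dots,x_n\in\mathbb{N}_0$, $$P(X_1=x_1,\dots,X_n=x_n)=\frac{1}{x_1!\cdots x_n!}\sum_{j_1=0}^{x_1}\cdots\sum_{j_n=0}^{x_n}\binom{x_1}{j_1}\cdots\binom{x_n}{j_n}\alpha_1^{j_1}\cdots\alpha_n^{j_n}\,\mathbb{E}\big(U^{j_1+\dots+j_n}e^{-(\alpha_1+\dots+\alpha_n)U}\big)\prod_{k=1}^n\mathbb{E}\big(V_k^{x_k-j_k}e^{-V_k}\big).$$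
   Context: This is the Poisson mixture model of random-additive-effect type. Conventions: $0^0=1$. *)

theory Defs
  imports "HOL-Probability.Probability"
begin

definition poisson_prob :: "real \<Rightarrow> nat \<Rightarrow> real" where
  "poisson_prob z k = exp (- z) * z ^ k / fact k"

end

theory Submission
  imports Defs
begin

lemma alg:
  fixes \<alpha> v :: "nat \<Rightarrow> real" and u :: real and x :: "nat \<Rightarrow> nat"
  shows "(\<Prod>i<n. poisson_prob (\<alpha> i * u + v i) (x i))
     = (1 / (\<Prod>i<n. fact (x i))) *
         (\<Sum>j \<in> Pi\<^sub>E {..<n} (\<lambda>i. {0..x i}).
            (\<Prod>i<n. real (x i choose j i) * \<alpha> i ^ j i) *
            (u ^ (\<Sum>i<n. j i) * exp (- (\<Sum>i<n. \<alpha> i) * u)) *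
            (\<Prod>k<n. v k ^ (x k - j k) * exp (- v k)))"
proof -
  have b: "(\<alpha> i * u + v i) ^ x i = (\<Sum>j\<in>{0..x i}. real (x i choose j) * (\<alpha> i * u) ^ j * v i ^ (x i - j))" for i
    by (simp add: binomial_ring atLeast0AtMost)
  have "(\<Prod>i<n. poisson_prob (\<alpha> i * u + v i) (x i))
      = (1 / (\<Prod>i<n. fact (x i))) * ((\<Prod>i<n. exp (- (\<alpha> i * u)) * exp (- v i)) * (\<Prod>i<n. (\<alpha> i * u + v i) ^ x i))"
    unfolding poisson_prob_def
    by (simp add: prod.distrib prod_dividef exp_add[symmetric] field_simps)
  also have "(\<Prod>i<n. (\<alpha> i * u + v i) ^ x i) = (\<Sum>j \<in> Pi\<^sub>E {..<n} (\<lambda>i. {0..x i}). \<Prod>i<n. real (x i choose j i) * (\<alpha> i * u) ^ j i * v i ^ (x i - j i))"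
    unfolding b by (rule prod_sum_PiE) auto
  also have "(\<Prod>i<n. exp (- (\<alpha> i * u)) * exp (- v i)) * \<dots> = (\<Sum>j \<in> Pi\<^sub>E {..<n} (\<lambda>i. {0..x i}).
            (\<Prod>i<n. real (x i choose j i) * \<alpha> i ^ j i) *
            (u ^ (\<Sum>i<n. j i) * exp (- (\<Sum>i<n. \<alpha> i) * u)) *
            (\<Prod>k<n. v k ^ (x k - j k) * exp (- v k)))"
    unfolding sum_distrib_left
  proof (rule sum.cong[OF refl])
    fix j :: "nat \<Rightarrow> nat"
    have e: "exp (- (\<Sum>i<n. \<alpha> i) * u) = (\<Prod>i<n. exp (- (\<alpha> i * u)))"
      by (simp add: exp_sum[symmetric] sum_distrib_right sum_negf)
    show "(\<Prod>i<n. exp (- (\<alpha> i * u)) * exp (- v i)) * (\<Prod>i<n. real (x i choose j i) * (\<alpha> i * u) ^ j i * v i ^ (x i - j i)) =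
         (\<Prod>i<n. real (x i choose j i) * \<alpha> i ^ j i) * (u ^ (\<Sum>i<n. j i) * exp (- (\<Sum>i<n. \<alpha> i) * u)) * (\<Prod>k<n. v k ^ (x k - j k) * exp (- v k))"
      unfolding e power_sum by (simp add: prod.distrib power_mult_distrib mult_ac)
  qed
  finally show ?thesis by simp
qed
lemma pow_le_exp: assumes "(v::real) \<ge> 0" shows "v ^ m / fact m \<le> exp v"
proof -
  have s: "(\<lambda>n. v ^ n / fact n) sums exp v"
    using exp_converges[of v] by (simp add: divide_inverse mult.commute scaleR_conv_of_real)
  have "sum (\<lambda>n. v ^ n / fact n) {m} \<le> suminf (\<lambda>n. v ^ n / fact n)"
    by (rule sum_le_suminf) (use s assms in \<open>auto simp: sums_iff\<close>)
  thus ?thesis using s by (simp add: sums_iff)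
qed

lemma bnd1: assumes "(v::real) \<ge> 0" shows "v ^ m * exp (- v) \<le> fact m"
proof -
  have "v ^ m / fact m \<le> exp v" by (rule pow_le_exp[OF assms])
  thus ?thesis by (simp add: exp_minus field_simps)
qed

lemma bnd2: assumes "(u::real) \<ge> 0" "a > 0" shows "u ^ m * exp (- a * u) \<le> fact m / a ^ m"
proof -
  have "(a * u) ^ m * exp (- (a * u)) \<le> fact m" by (rule bnd1) (use assms in simp)
  thus ?thesis using assms by (simp add: field_simps power_mult_distrib)
qed

theorem proposition4:
  fixes M :: "'a measure" and n :: nat
    and \<alpha> :: "nat \<Rightarrow> real"
    and U :: "'a \<Rightarrow> real" and V :: "nat \<Rightarrow> 'a \<Rightarrow> real"
    and fU :: "real \<Rightarrow> ennreal" and fV :: "nat \<Rightarrow> real \<Rightarrow> ennreal"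
    and X :: "nat \<Rightarrow> 'a \<Rightarrow> nat"
    and x :: "nat \<Rightarrow> nat"
  assumes P: "prob_space M"
    and alpha_nonneg: "\<And>i. i < n \<Longrightarrow> \<alpha> i \<ge> 0"
    and U_dist: "distributed M lborel U fU"
    and V_dist: "\<And>i. i < n \<Longrightarrow> distributed M lborel (V i) (fV i)"
    and U_nonneg: "AE \<omega> in M. U \<omega> \<ge> 0"
    and V_nonneg: "\<And>i. i < n \<Longrightarrow> AE \<omega> in M. V i \<omega> \<ge> 0"
    and indep: "prob_space.indep_vars M (\<lambda>_. borel)
                  (\<lambda>i. case i of None \<Rightarrow> U | Some k \<Rightarrow> V k) (insert None (Some ` {..<n}))"
    and X_meas: "\<And>i. i < n \<Longrightarrow> X i \<in> measurable M (count_space UNIV)"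
    and X_cond: "\<And>B0 B y. B0 \<in> sets borel \<Longrightarrow> (\<And>i. i < n \<Longrightarrow> B i \<in> sets borel) \<Longrightarrow>
        measure M {\<omega> \<in> space M. (\<forall>i<n. X i \<omega> = y i) \<and> U \<omega> \<in> B0 \<and> (\<forall>i<n. V i \<omega> \<in> B i)}
        = (\<integral>\<omega>. indicator {\<omega>. U \<omega> \<in> B0 \<and> (\<forall>i<n. V i \<omega> \<in> B i)} \<omega> *
              (\<Prod>i<n. poisson_prob (\<alpha> i * U \<omega> + V i \<omega>) (y i)) \<partial>M)"
  shows "measure M {\<omega> \<in> space M. \<forall>i<n. X i \<omega> = x i}
       = (1 / (\<Prod>i<n. fact (x i))) *
         (\<Sum>j \<in> Pi\<^sub>E {..<n} (\<lambda>i. {0..x i}).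
            (\<Prod>i<n. real (x i choose j i) * \<alpha> i ^ j i) *
            (\<integral>\<omega>. U \<omega> ^ (\<Sum>i<n. j i) * exp (- (\<Sum>i<n. \<alpha> i) * U \<omega>) \<partial>M) *
            (\<Prod>k<n. (\<integral>\<omega>. V k \<omega> ^ (x k - j k) * exp (- V k \<omega>) \<partial>M)))"
  proof -
  interpret prob_space M by (rule P)
  have Um[measurable]: "U \<in> borel_measurable M"
    using distributed_measurable[OF U_dist] by (simp add: measurable_cong_sets[OF refl sets_lborel])
  have Vm: "V k \<in> borel_measurable M" if "k < n" for k
    using distributed_measurable[OF V_dist[OF that]] by (simp add: measurable_cong_sets[OF refl sets_lborel])
  define c where "c j = (\<Prod>i<n. real (x i choose j i) * \<alpha> i ^ j i)" for j
  define A where "A = (\<Sum>i<n. \<alpha> i)"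
  define FU where "FU j \<omega> = U \<omega> ^ (\<Sum>i<n. j i) * exp (- A * U \<omega>)" for j \<omega>
  define GV where "GV j k \<omega> = V k \<omega> ^ (x k - j k) * exp (- V k \<omega>)" for j k \<omega>
  define I where "I = insert None (Some ` {..<n})"
  have A0: "A \<ge> 0" unfolding A_def by (rule sum_nonneg) (simp add: alpha_nonneg)
  have key: "integrable M (\<lambda>\<omega>. c j * (FU j \<omega> * (\<Prod>k<n. GV j k \<omega>))) \<and>
     (\<integral>\<omega>. c j * (FU j \<omega> * (\<Prod>k<n. GV j k \<omega>)) \<partial>M) = c j * (\<integral>\<omega>. FU j \<omega> \<partial>M) * (\<Prod>k<n. \<integral>\<omega>. GV j k \<omega> \<partial>M)" for j
  proof (cases "c j = 0")
    case True thus ?thesis by simp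
  next
    case False
    have nz: "\<alpha> i ^ j i \<noteq> 0" if "i < n" for i using False that by (auto simp: c_def)
    have GVm: "GV j k \<in> borel_measurable M" if "k < n" for k
      unfolding GV_def using Vm[OF that] by measurable
    have GVint: "integrable M (GV j k)" if "k < n" for k
    proof (rule integrable_const_bound[where B="fact (x k - j k)"])
      show "AE \<omega> in M. norm (GV j k \<omega>) \<le> fact (x k - j k)"
        using V_nonneg[OF that] by eventually_elim (simp add: GV_def abs_mult bnd1)
      show "GV j k \<in> borel_measurable M" by (rule GVm[OF that])
    qed
    have FUm: "FU j \<in> borel_measurable M" unfolding FU_def by measurable
    have FUint: "integrable M (FU j)"
    proof (cases "A > 0")
      case True
      show ?thesis
      proof (rule integrable_const_bound[where B="fact (\<Sum>i<n. j i) / A ^ (\<Sum>i<n. j i)"])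
        show "AE \<omega> in M. norm (FU j \<omega>) \<le> fact (\<Sum>i<n. j i) / A ^ (\<Sum>i<n. j i)"
          using U_nonneg by eventually_elim (use bnd2[OF _ True] in \<open>simp add: FU_def abs_mult\<close>)
      qed (rule FUm)
    next
      case False
      with A0 have "A = 0" by simp
      hence "\<forall>i\<in>{..<n}. \<alpha> i = 0" using alpha_nonneg unfolding A_def
        by (subst sum_nonneg_eq_0_iff[symmetric]) auto
      hence "\<forall>i<n. j i = 0" using nz by (metis lessThan_iff power_0_left)
      hence "FU j = (\<lambda>_. 1)" using \<open>A = 0\<close> by (simp add: FU_def fun_eq_iff)
      thus ?thesis by simp
    qed
    define Y where "Y i = (case i of None \<Rightarrow> (\<lambda>u::real. u ^ (\<Sum>i<n. j i) * exp (- A * u))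
                          | Some k \<Rightarrow> (\<lambda>v. v ^ (x k - j k) * exp (- v)))" for i
    have "indep_vars (\<lambda>_. borel) (\<lambda>i \<omega>. Y i ((case i of None \<Rightarrow> U | Some k \<Rightarrow> V k) \<omega>)) I"
      unfolding I_def
      by (rule indep_vars_compose2[OF indep]) (auto simp: Y_def split: option.split)
    also have "(\<lambda>i \<omega>. Y i ((case i of None \<Rightarrow> U | Some k \<Rightarrow> V k) \<omega>)) =
        (\<lambda>i \<omega>. case i of None \<Rightarrow> FU j \<omega> | Some k \<Rightarrow> GV j k \<omega>)"
      by (auto simp: fun_eq_iff Y_def FU_def GV_def split: option.split)
    finally have ind: "indep_vars (\<lambda>_. borel) (\<lambda>i \<omega>. case i of None \<Rightarrow> FU j \<omega> | Some k \<Rightarrow> GV j k \<omega>) I" .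
    have ints: "integrable M (\<lambda>\<omega>. case i of None \<Rightarrow> FU j \<omega> | Some k \<Rightarrow> GV j k \<omega>)" if "i \<in> I" for i
      using that FUint GVint by (auto simp: I_def)
    have fin: "finite I" by (simp add: I_def)
    have pr: "(\<Prod>i\<in>I. f i) = f None * (\<Prod>k<n. f (Some k))" for f :: "nat option \<Rightarrow> real"
      by (simp add: I_def prod.reindex)
    have "(\<integral>\<omega>. FU j \<omega> * (\<Prod>k<n. GV j k \<omega>) \<partial>M) = (\<integral>\<omega>. FU j \<omega> \<partial>M) * (\<Prod>k<n. \<integral>\<omega>. GV j k \<omega> \<partial>M)"
      using indep_vars_lebesgue_integral[OF fin ind ints] by (simp add: pr)
    moreover have "integrable M (\<lambda>\<omega>. FU j \<omega> * (\<Prod>k<n. GV j k \<omega>))"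
      using indep_vars_integrable[OF fin ind ints] by (simp add: pr)
    ultimately show ?thesis by simp
  qed
  have "measure M {\<omega> \<in> space M. \<forall>i<n. X i \<omega> = x i}
      = measure M {\<omega> \<in> space M. (\<forall>i<n. X i \<omega> = x i) \<and> U \<omega> \<in> UNIV \<and> (\<forall>i<n. V i \<omega> \<in> UNIV)}"
    by simp
  also have "\<dots> = (\<integral>\<omega>. indicator {\<omega>. U \<omega> \<in> UNIV \<and> (\<forall>i<n. V i \<omega> \<in> UNIV)} \<omega> *
              (\<Prod>i<n. poisson_prob (\<alpha> i * U \<omega> + V i \<omega>) (x i)) \<partial>M)"
    by (rule X_cond) auto
  also have "\<dots> = (\<integral>\<omega>. (1 / (\<Prod>i<n. fact (x i))) *
         (\<Sum>j \<in> Pi\<^sub>E {..<n} (\<lambda>i. {0..x i}). c j * (FU j \<omega> * (\<Prod>k<n. GV j k \<omega>))) \<partial>M)"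
    by (rule Bochner_Integration.integral_cong[OF refl])
       (simp add: alg c_def FU_def GV_def A_def mult.assoc)
  also have "\<dots> = (1 / (\<Prod>i<n. fact (x i))) *
         (\<Sum>j \<in> Pi\<^sub>E {..<n} (\<lambda>i. {0..x i}). (\<integral>\<omega>. c j * (FU j \<omega> * (\<Prod>k<n. GV j k \<omega>)) \<partial>M))"
  proof -
    have "(\<integral>\<omega>. (\<Sum>j \<in> Pi\<^sub>E {..<n} (\<lambda>i. {0..x i}). c j * (FU j \<omega> * (\<Prod>k<n. GV j k \<omega>))) \<partial>M)
       = (\<Sum>j \<in> Pi\<^sub>E {..<n} (\<lambda>i. {0..x i}). (\<integral>\<omega>. c j * (FU j \<omega> * (\<Prod>k<n. GV j k \<omega>)) \<partial>M))"
      by (rule Bochner_Integration.integral_sum[where f="\<lambda>j \<omega>. c j * (FU j \<omega> * (\<Prod>k<n. GV j k \<omega>))"]) (use key in blast)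
    thus ?thesis by (simp only: integral_mult_right_zero)
  qed
  also have "\<dots> = (1 / (\<Prod>i<n. fact (x i))) *
         (\<Sum>j \<in> Pi\<^sub>E {..<n} (\<lambda>i. {0..x i}). c j * (\<integral>\<omega>. FU j \<omega> \<partial>M) * (\<Prod>k<n. \<integral>\<omega>. GV j k \<omega> \<partial>M))"
    by (rule arg_cong[where f="\<lambda>t. _ * t"], rule sum.cong[OF refl]) (use key in blast)
  finally show ?thesis by (simp add: c_def FU_def GV_def A_def)
qed


end
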